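(* Let $n\ge3$ and $R$ an associative ring with identity. Then $E_n(R)$ is normally generated by a subgroup isomorphic to $A_{n+1}$, namely the image of $A_{n+1}<\mathrm{SAut}(F_n)$ under $\mathrm{SAut}(F_n)\to\mathrm{SL}_n(\mathbb{Z})=E_n(\mathbb{Z})\to E_n(R)$, the last map induced by the ring map $\mathbb{Z}\to R$.
   Context: $E_n(R)$ is the subgroup of $\mathrm{GL}_n(R)$ generated by the elementary matrices $e_{ij}(r)$ ($1\le i\ne j\le n$, $r\in R$) with $1$'s on the diagonal, $r$ at $(i,j)$, zeros elsewhere. The subgroup $A_{n+1}<\mathrm{SAut}(F_n)$: with $F_n=\langle a_1,\dots,a_n\rangle$, $\sigma_{ij}$ ($1\le i\ne j\le n$) swaps $a_i,a_j$, and $\sigma_{i,n+1}$ sends $a_i\mapsto a_i^{-1}$, $a_j\mapsto a_ja_i^{-1}$ ($j\neq i$); these generate $S_{n+1}$ and $A_{n+1}$ is its even part. The map $\mathrm{SAut}(F_n)\to\mathrm{SL}_n(\mathbb{Z})$ is induced by the action on $F_n^{ab}=\mathbb{Z}^n$, and it is injective on this $A_{n+1}$. *)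

theory Defs
  imports "Jordan_Normal_Form.Matrix"
begin

definition elem_mat :: "nat \<Rightarrow> nat \<Rightarrow> nat \<Rightarrow> 'a::ring_1 \<Rightarrow> 'a mat" where
  "elem_mat n i j r = mat n n (\<lambda>(k,l). if k = l then 1 else if k = i \<and> l = j then r else 0)"

definition elem_gens :: "nat \<Rightarrow> 'a::ring_1 mat set" where
  "elem_gens n = {elem_mat n i j r | i j r. i < n \<and> j < n \<and> i \<noteq> j}"

definition is_inv_mat :: "nat \<Rightarrow> 'a::ring_1 mat \<Rightarrow> 'a mat \<Rightarrow> bool" where
  "is_inv_mat n A B \<longleftrightarrow> B \<in> carrier_mat n n \<and> A * B = 1\<^sub>m n \<and> B * A = 1\<^sub>m n"

inductive_set gen_subgroup :: "nat \<Rightarrow> 'a::ring_1 mat set \<Rightarrow> 'a mat set"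
  for n :: nat and S :: "'a mat set" where
  gen_one: "1\<^sub>m n \<in> gen_subgroup n S"
| gen_gen: "s \<in> S \<Longrightarrow> s \<in> gen_subgroup n S"
| gen_mult: "x \<in> gen_subgroup n S \<Longrightarrow> y \<in> gen_subgroup n S \<Longrightarrow> x * y \<in> gen_subgroup n S"
| gen_inv: "x \<in> gen_subgroup n S \<Longrightarrow> is_inv_mat n x y \<Longrightarrow> y \<in> gen_subgroup n S"

definition E_group :: "nat \<Rightarrow> 'a::ring_1 mat set" where
  "E_group n = gen_subgroup n (elem_gens n)"

definition normal_closure :: "nat \<Rightarrow> 'a::ring_1 mat set \<Rightarrow> 'a mat set \<Rightarrow> 'a mat set" where
  "normal_closure n G H =
     gen_subgroup n {g * h * g' | g h g'. g \<in> G \<and> h \<in> H \<and> is_inv_mat n g g'}"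

text \<open>Integer matrices (images in SL_n(Z) = GL(F_n^ab)) of the generators sigma_ij of
  S_{n+1} < Aut(F_n).  Indices 0..n-1 correspond to a_1..a_n, index n to n+1.
  Convention: column l of the matrix of phi is the abelianisation of phi(a_l),
  so that composition of automorphisms corresponds to matrix product.\<close>

definition sigma_swap :: "nat \<Rightarrow> nat \<Rightarrow> nat \<Rightarrow> int mat" where
  "sigma_swap n i j = mat n n (\<lambda>(k,l).
      if k = (if l = i then j else if l = j then i else l) then 1 else 0)"

text \<open>sigma_{i,n+1}: a_i |-> a_i^{-1}, a_l |-> a_l a_i^{-1} (l ~= i).\<close>
definition sigma_last :: "nat \<Rightarrow> nat \<Rightarrow> int mat" where
  "sigma_last n i = mat n n (\<lambda>(k,l).
      if l = i then (if k = i then -1 else 0)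
      else (if k = l then 1 else 0) - (if k = i then 1 else 0))"

definition sigma_gens :: "nat \<Rightarrow> int mat set" where
  "sigma_gens n = {sigma_swap n i j | i j. i < n \<and> j < n \<and> i \<noteq> j}
                 \<union> {sigma_last n i | i. i < n}"

text \<open>The image of A_{n+1} in SL_n(Z): the sigma's are the transpositions generating
  S_{n+1}, so the even part consists of the products of an even number of them.\<close>
definition alt_mats :: "nat \<Rightarrow> int mat set" where
  "alt_mats n = {foldr (*) ws (1\<^sub>m n) | ws. set ws \<subseteq> sigma_gens n \<and> even (length ws)}"

definition mat_of_int_mat :: "int mat \<Rightarrow> 'a::ring_1 mat" where
  "mat_of_int_mat A = map_mat of_int A"

end

theory Submission
  imports Defs
begin


lemma prod_entry:
  assumes "A \<in> carrier_mat n n" "B \<in> carrier_mat n n" "k < n" "l < n"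
  shows "(A * B) $$ (k,l) = (\<Sum>m<n. A $$ (k,m) * B $$ (m,l))"
  using assms by (simp add: scalar_prod_def lessThan_atLeast0)

declare index_mult_mat(1)[simp del]

lemma elem_carrier[simp]: "elem_mat n i j r \<in> carrier_mat n n"
  by (simp add: elem_mat_def)

lemma elem_dim[simp]: "dim_row (elem_mat n i j r) = n" "dim_col (elem_mat n i j r) = n"
  by (simp_all add: elem_mat_def)

lemma elem_entry: "k < n \<Longrightarrow> l < n \<Longrightarrow> elem_mat n i j r $$ (k,l) =
   (if k = l then 1 else if k = i \<and> l = j then r else 0)"
  by (simp add: elem_mat_def)

lemma elem_left:
  assumes "dim_row A = n" "dim_col A = n" "i \<noteq> j" "i < n" "j < n" "k < n" "l < n"
  shows "(elem_mat n i j r * A) $$ (k,l) = A $$ (k,l) + (if k = i then r * A $$ (j,l) else 0)"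
proof -
  have "(elem_mat n i j r * A) $$ (k,l) = (\<Sum>m<n. elem_mat n i j r $$ (k,m) * A $$ (m,l))"
    using assms by (intro prod_entry) (auto intro: carrier_matI)
  also have "\<dots> = (\<Sum>m<n. (if m = k then A $$ (m,l) else 0) + (if m = j then (if k = i then r * A $$ (m,l) else 0) else 0))"
    using assms by (intro sum.cong) (auto simp: elem_entry)
  also have "\<dots> = A $$ (k,l) + (if k = i then r * A $$ (j,l) else 0)"
    using assms by (simp add: sum.distrib)
  finally show ?thesis .
qed

lemma elem_right:
  assumes "dim_row A = n" "dim_col A = n" "i \<noteq> j" "i < n" "j < n" "k < n" "l < n"
  shows "(A * elem_mat n i j r) $$ (k,l) = A $$ (k,l) + (if l = j then A $$ (k,i) * r else 0)"
proof -
  have "(A * elem_mat n i j r) $$ (k,l) = (\<Sum>m<n. A $$ (k,m) * elem_mat n i j r $$ (m,l))"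
    using assms by (intro prod_entry) (auto intro: carrier_matI)
  also have "\<dots> = (\<Sum>m<n. (if m = l then A $$ (k,m) else 0) + (if m = i then (if l = j then A $$ (k,m) * r else 0) else 0))"
    using assms by (intro sum.cong) (auto simp: elem_entry)
  also have "\<dots> = A $$ (k,l) + (if l = j then A $$ (k,i) * r else 0)"
    using assms by (simp add: sum.distrib)
  finally show ?thesis .
qed

definition perm_mat :: "nat \<Rightarrow> (nat \<Rightarrow> nat) \<Rightarrow> 'a::ring_1 mat" where
  "perm_mat n p = mat n n (\<lambda>(k,l). if k = p l then 1 else 0)"

lemma perm_carrier[simp]: "perm_mat n p \<in> carrier_mat n n"
  by (simp add: perm_mat_def)

lemma perm_dim[simp]: "dim_row (perm_mat n p) = n" "dim_col (perm_mat n p) = n"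
  by (simp_all add: perm_mat_def)

lemma perm_right:
  assumes "dim_row A = n" "dim_col A = n" "p l < n" "k < n" "l < n"
  shows "(A * perm_mat n p) $$ (k,l) = A $$ (k, p l)"
proof -
  have "(A * perm_mat n p) $$ (k,l) = (\<Sum>m<n. A $$ (k,m) * perm_mat n p $$ (m,l))"
    using assms by (intro prod_entry) (auto intro: carrier_matI)
  also have "\<dots> = (\<Sum>m<n. if m = p l then A $$ (k,m) else 0)"
    using assms by (intro sum.cong) (auto simp: perm_mat_def)
  also have "\<dots> = A $$ (k, p l)" using assms by simp
  finally show ?thesis .
qed

lemma perm_left:
  assumes "dim_row A = n" "dim_col A = n" "q k < n" "k < n" "l < n" "\<And>m. m < n \<Longrightarrow> (k = p m) = (m = q k)"
  shows "(perm_mat n p * A) $$ (k,l) = A $$ (q k, l)"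
proof -
  have "(perm_mat n p * A) $$ (k,l) = (\<Sum>m<n. perm_mat n p $$ (k,m) * A $$ (m,l))"
    using assms by (intro prod_entry) (auto intro: carrier_matI)
  also have "\<dots> = (\<Sum>m<n. if m = q k then A $$ (m,l) else 0)"
    using assms by (intro sum.cong) (auto simp: perm_mat_def)
  also have "\<dots> = A $$ (q k, l)" using assms by simp
  finally show ?thesis .
qed

definition dsign :: "nat \<Rightarrow> nat \<Rightarrow> 'a::ring_1 mat" where
  "dsign n a = mat n n (\<lambda>(k,l). if k = l then (if k = a then -1 else 1) else 0)"

lemma dsign_carrier[simp]: "dsign n a \<in> carrier_mat n n"
  by (simp add: dsign_def)

lemma dsign_dim[simp]: "dim_row (dsign n a) = n" "dim_col (dsign n a) = n"
  by (simp_all add: dsign_def)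

lemma dsign_left:
  assumes "dim_row A = n" "dim_col A = n" "k < n" "l < n"
  shows "(dsign n a * A) $$ (k,l) = (if k = a then - A $$ (k,l) else A $$ (k,l))"
proof -
  have "(dsign n a * A) $$ (k,l) = (\<Sum>m<n. dsign n a $$ (k,m) * A $$ (m,l))"
    using assms by (intro prod_entry) (auto intro: carrier_matI)
  also have "\<dots> = (\<Sum>m<n. if m = k then (if k = a then - A $$ (k,l) else A $$ (k,l)) else 0)"
    using assms by (intro sum.cong) (auto simp: dsign_def)
  also have "\<dots> = (if k = a then - A $$ (k,l) else A $$ (k,l))" using assms by simp
  finally show ?thesis .
qed

lemma dsign_right:
  assumes "dim_row A = n" "dim_col A = n" "k < n" "l < n"
  shows "(A * dsign n a) $$ (k,l) = (if l = a then - A $$ (k,l) else A $$ (k,l))"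
proof -
  have "(A * dsign n a) $$ (k,l) = (\<Sum>m<n. A $$ (k,m) * dsign n a $$ (m,l))"
    using assms by (intro prod_entry) (auto intro: carrier_matI)
  also have "\<dots> = (\<Sum>m<n. if m = l then (if l = a then - A $$ (k,l) else A $$ (k,l)) else 0)"
    using assms by (intro sum.cong) (auto simp: dsign_def)
  also have "\<dots> = (if l = a then - A $$ (k,l) else A $$ (k,l))" using assms by simp
  finally show ?thesis .
qed

lemma mat_of_int_mult:
  assumes "A \<in> carrier_mat n n" "B \<in> carrier_mat n n"
  shows "(mat_of_int_mat (A * B) :: 'a::ring_1 mat) = mat_of_int_mat A * mat_of_int_mat B"
  using assms unfolding mat_of_int_mat_def
  by (rule of_int_hom.mat_hom_mult)

lemma mat_of_int_one: "(mat_of_int_mat (1\<^sub>m n) :: 'a::ring_1 mat) = 1\<^sub>m n"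
  unfolding mat_of_int_mat_def by (intro eq_matI) auto

lemma mat_of_int_carrier[simp]: "A \<in> carrier_mat n n \<Longrightarrow> mat_of_int_mat A \<in> carrier_mat n n"
  by (simp add: mat_of_int_mat_def)



lemma gen_carrier:
  assumes "S \<subseteq> carrier_mat n n" "x \<in> gen_subgroup n S"
  shows "x \<in> carrier_mat n n"
  using assms(2) by induct (use assms(1) in \<open>auto simp: is_inv_mat_def\<close>)

lemma elem_gens_carrier: "elem_gens n \<subseteq> carrier_mat n n"
  by (auto simp: elem_gens_def)

lemma E_carrier: "x \<in> E_group n \<Longrightarrow> x \<in> carrier_mat n n"
  unfolding E_group_def using gen_carrier[OF elem_gens_carrier] by blast

lemma elem_add: assumes "i \<noteq> j" "i < n" "j < n"
  shows "elem_mat n i j a * elem_mat n i j b = elem_mat n i j (a + b)"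
  using assms by (intro eq_matI) (auto simp: elem_right elem_entry)

lemma elem_zero: "elem_mat n i j 0 = 1\<^sub>m n"
  by (intro eq_matI) (auto simp: elem_entry)

lemma elem_inv: assumes "i \<noteq> j" "i < n" "j < n"
  shows "is_inv_mat n (elem_mat n i j a) (elem_mat n i j (-a))"
  using assms by (simp add: is_inv_mat_def elem_add elem_zero)

lemma elem_in_E: assumes "i \<noteq> j" "i < n" "j < n"
  shows "elem_mat n i j a \<in> E_group n"
  unfolding E_group_def using assms by (intro gen_gen) (auto simp: elem_gens_def)

lemma inv_sym: "is_inv_mat n x y \<Longrightarrow> x \<in> carrier_mat n n \<Longrightarrow> is_inv_mat n y x"
  by (auto simp: is_inv_mat_def)

lemma inv_mult:
  assumes "is_inv_mat n x x'" "is_inv_mat n y y'" "x \<in> carrier_mat n n" "y \<in> carrier_mat n n"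
  shows "is_inv_mat n (x * y) (y' * x')"
proof -
  have c: "x' \<in> carrier_mat n n" "y' \<in> carrier_mat n n" using assms by (auto simp: is_inv_mat_def)
  have "x * y * (y' * x') = x * (y * y') * x'" using assms c by (simp add: assoc_mult_mat[of _ n n _ n _ n])
  also have "\<dots> = 1\<^sub>m n" using assms c by (simp add: is_inv_mat_def)
  finally have 1: "x * y * (y' * x') = 1\<^sub>m n" .
  have "y' * x' * (x * y) = y' * (x' * x) * y" using assms c by (simp add: assoc_mult_mat[of _ n n _ n _ n])
  also have "\<dots> = 1\<^sub>m n" using assms c by (simp add: is_inv_mat_def)
  finally have 2: "y' * x' * (x * y) = 1\<^sub>m n" .
  show ?thesis using 1 2 c by (simp add: is_inv_mat_def)
qed

lemma E_inv: "x \<in> E_group n \<Longrightarrow> \<exists>y \<in> E_group n. is_inv_mat n x y"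
  unfolding E_group_def
proof (induct rule: gen_subgroup.induct)
  case gen_one
  then show ?case by (intro bexI[of _ "1\<^sub>m n"]) (auto simp: is_inv_mat_def intro: gen_subgroup.gen_one)
next
  case (gen_gen s)
  then obtain i j r where s: "s = elem_mat n i j r" "i < n" "j < n" "i \<noteq> j" by (auto simp: elem_gens_def)
  then show ?case using elem_inv[of i j n r] elem_in_E[of i j n "-r"] unfolding E_group_def by blast
next
  case (gen_mult x y)
  then obtain x' y' where "x' \<in> gen_subgroup n (elem_gens n)" "y' \<in> gen_subgroup n (elem_gens n)"
    "is_inv_mat n x x'" "is_inv_mat n y y'" by blast
  moreover have "x \<in> carrier_mat n n" "y \<in> carrier_mat n n"
    using gen_mult E_carrier unfolding E_group_def by blast+
  ultimately show ?case using inv_mult by (blast intro: gen_subgroup.gen_mult)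
next
  case (gen_inv x y)
  then show ?case using inv_sym E_carrier unfolding E_group_def by blast
qed

lemma gen_mono:
  assumes "S \<subseteq> gen_subgroup n T" "x \<in> gen_subgroup n S"
  shows "x \<in> gen_subgroup n T"
  using assms(2) by induct (use assms(1) in \<open>auto intro: gen_subgroup.intros\<close>)



lemma mult_carrier_n[simp]: "A \<in> carrier_mat n n \<Longrightarrow> B \<in> carrier_mat n n \<Longrightarrow> A * B \<in> carrier_mat n n"
  by simp

lemma assoc_r: "dim_col A = dim_row B \<Longrightarrow> dim_col B = dim_row C \<Longrightarrow> A * (B * C) = A * B * C"
  by (rule assoc_mult_mat[symmetric]) (auto intro: carrier_matI)

lemma N_carrier:
  assumes "H \<subseteq> carrier_mat n n" "x \<in> normal_closure n (E_group n) H"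
  shows "x \<in> carrier_mat n n"
proof -
  have "{g * h * g' |g h g'. g \<in> E_group n \<and> h \<in> H \<and> is_inv_mat n g g'} \<subseteq> carrier_mat n n"
    using assms(1) E_carrier by (force intro: mult_carrier_mat simp: is_inv_mat_def)
  then show ?thesis using gen_carrier assms(2) unfolding normal_closure_def by blast
qed

lemma normal_lemma:
  assumes H: "H \<subseteq> carrier_mat n n" and g: "g \<in> E_group n" "is_inv_mat n g g'"
    and h: "h \<in> normal_closure n (E_group n) H"
  shows "g * h * g' \<in> normal_closure n (E_group n) H"
  using h[unfolded normal_closure_def] g
proof (induct arbitrary: g g' rule: gen_subgroup.induct)
  case gen_one
  then show ?case unfolding normal_closure_def
    using E_carrier[of g n] by (auto simp: is_inv_mat_def intro: gen_subgroup.gen_one)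
next
  case (gen_gen s)
  then obtain g1 h1 g1' where s: "s = g1 * h1 * g1'" "g1 \<in> E_group n" "h1 \<in> H" "is_inv_mat n g1 g1'"
    by blast
  have c: "g \<in> carrier_mat n n" "g1 \<in> carrier_mat n n" "h1 \<in> carrier_mat n n"
      "g' \<in> carrier_mat n n" "g1' \<in> carrier_mat n n"
    using s gen_gen H E_carrier by (auto simp: is_inv_mat_def)
  have "g * s * g' = (g * g1) * h1 * (g1' * g')"
    using c s by (simp add: assoc_mult_mat[of _ n n _ n _ n])
  moreover have "g * g1 \<in> E_group n" using s gen_gen unfolding E_group_def
    by (blast intro: gen_subgroup.gen_mult)
  moreover have "is_inv_mat n (g * g1) (g1' * g')" using inv_mult s gen_gen c by blast
  ultimately show ?case unfolding normal_closure_def using s by (blast intro: gen_subgroup.gen_gen)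
next
  case (gen_mult x y)
  have cx: "x \<in> carrier_mat n n" "y \<in> carrier_mat n n"
    using gen_mult N_carrier[OF H] unfolding normal_closure_def by blast+
  have c: "g \<in> carrier_mat n n" "g' \<in> carrier_mat n n" using gen_mult E_carrier by (auto simp: is_inv_mat_def)
  have "g * (x * y) * g' = (g * x * g') * (g * y * g')"
  proof -
    have "(g * x * g') * (g * y * g') = g * x * (g' * g) * y * g'"
      using c cx by (simp add: assoc_mult_mat[of _ n n _ n _ n])
    also have "\<dots> = g * (x * y) * g'" using c cx gen_mult by (simp add: is_inv_mat_def assoc_mult_mat[of _ n n _ n _ n])
    finally show ?thesis by simp
  qed
  then show ?case using gen_mult unfolding normal_closure_def by (auto intro: gen_subgroup.gen_mult)
next
  case (gen_inv x y)
  have cx: "x \<in> carrier_mat n n"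
    using gen_inv N_carrier[OF H] unfolding normal_closure_def by blast+
  have c: "g \<in> carrier_mat n n" "g' \<in> carrier_mat n n" using gen_inv E_carrier by (auto simp: is_inv_mat_def)
  have i1: "is_inv_mat n g' g" using inv_sym c gen_inv by blast
  have "is_inv_mat n (g * x * g') (g * y * g')"
    using inv_mult[OF inv_mult[OF gen_inv(5) gen_inv(3)] i1] c cx gen_inv(3)
    by (simp add: is_inv_mat_def assoc_mult_mat[of _ n n _ n _ n])
  then show ?case using gen_inv(2)[OF gen_inv(4,5)] unfolding normal_closure_def by (blast intro: gen_subgroup.gen_inv)
qed

lemma comm1:
  assumes H: "H \<subseteq> carrier_mat n n" and x: "x \<in> normal_closure n (E_group n) H" "is_inv_mat n x x'"
    and g: "g \<in> E_group n" "is_inv_mat n g g'"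
  shows "x * g * x' * g' \<in> normal_closure n (E_group n) H"
proof -
  have c: "x \<in> carrier_mat n n" "g \<in> carrier_mat n n" "x' \<in> carrier_mat n n" "g' \<in> carrier_mat n n"
    using N_carrier[OF H] x g E_carrier by (auto simp: is_inv_mat_def)
  have "x' \<in> normal_closure n (E_group n) H" using x unfolding normal_closure_def
    by (blast intro: gen_subgroup.gen_inv)
  then have "g * x' * g' \<in> normal_closure n (E_group n) H" using normal_lemma[OF H g] by blast
  then have "x * (g * x' * g') \<in> normal_closure n (E_group n) H" using x unfolding normal_closure_def
    by (blast intro: gen_subgroup.gen_mult)
  moreover have "x * (g * x' * g') = x * g * x' * g'" using c by (simp add: assoc_mult_mat[of _ n n _ n _ n])
  ultimately show ?thesis by simp
qed

lemma comm2:
  assumes H: "H \<subseteq> carrier_mat n n" and x: "x \<in> normal_closure n (E_group n) H" "is_inv_mat n x x'"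
    and g: "g \<in> E_group n" "is_inv_mat n g g'"
  shows "g * x * g' * x' \<in> normal_closure n (E_group n) H"
proof -
  have "x' \<in> normal_closure n (E_group n) H" using x unfolding normal_closure_def
    by (blast intro: gen_subgroup.gen_inv)
  moreover have "g * x * g' \<in> normal_closure n (E_group n) H" using normal_lemma[OF H g x(1)] by blast
  ultimately show ?thesis unfolding normal_closure_def by (blast intro: gen_subgroup.gen_mult)
qed

lemma steinberg:
  assumes "i \<noteq> j" "j \<noteq> k" "i \<noteq> k" "i < n" "j < n" "k < n"
  shows "elem_mat n i j a * elem_mat n j k b * elem_mat n i j (-a) * elem_mat n j k (-b) = elem_mat n i k (a * b)"
proof (intro eq_matI)
  fix p q assume pq: "p < dim_row (elem_mat n i k (a * b))" "q < dim_col (elem_mat n i k (a * b))"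
  have "(elem_mat n i j a * elem_mat n j k b * elem_mat n i j (-a) * elem_mat n j k (-b)) $$ (p,q)
    = ((elem_mat n i j a * elem_mat n j k b * elem_mat n i j (-a)) $$ (p,q)) + (if q = k then (elem_mat n i j a * elem_mat n j k b * elem_mat n i j (-a)) $$ (p,j) * (-b) else 0)"
    using assms pq by (intro elem_right) auto
  show "(elem_mat n i j a * elem_mat n j k b * elem_mat n i j (-a) * elem_mat n j k (-b)) $$ (p,q) = elem_mat n i k (a * b) $$ (p,q)"
    using assms pq apply (simp add: elem_right elem_entry)
    done
qed auto



lemma perm_entry: "k < n \<Longrightarrow> l < n \<Longrightarrow> perm_mat n p $$ (k,l) = (if k = p l then 1 else 0)"
  by (simp add: perm_mat_def)

definition c3 :: "nat \<Rightarrow> nat" where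
  "c3 m = (if m = 0 then 1 else if m = 1 then 2 else if m = 2 then 0 else m)"
definition c3i :: "nat \<Rightarrow> nat" where
  "c3i m = (if m = 0 then 2 else if m = 1 then 0 else if m = 2 then 1 else m)"

lemma c3_lt: "n \<ge> 3 \<Longrightarrow> m < n \<Longrightarrow> c3 m < n" by (simp add: c3_def)
lemma c3i_lt: "n \<ge> 3 \<Longrightarrow> m < n \<Longrightarrow> c3i m < n" by (simp add: c3i_def)

lemma c3_c3i[simp]: "c3 (c3i q) = q" by (simp add: c3_def c3i_def)
lemma c3i_c3[simp]: "c3i (c3 q) = q" by (simp add: c3_def c3i_def)
lemma c3i_1: "(c3i q = 1) = (q = 2)" by (simp add: c3i_def)
lemma c3i_Suc0[simp]: "(c3i q = Suc 0) = (q = 2)" by (simp add: c3i_def)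
lemma c3_0[simp]: "c3 0 = 1" by (simp add: c3_def)

lemma perm_inv_c3:
  assumes "n \<ge> 3"
  shows "is_inv_mat n (perm_mat n c3 :: 'a::ring_1 mat) (perm_mat n c3i)"
  unfolding is_inv_mat_def using assms
  by (auto intro!: eq_matI simp: perm_right perm_entry c3_lt c3i_lt) 

lemma conj_c3:
  assumes n: "n \<ge> 3"
  shows "perm_mat n c3 * elem_mat n 0 1 (-r) * perm_mat n c3i = (elem_mat n 1 2 (-r) :: 'a::ring_1 mat)"
proof (rule eq_matI)
  fix p q assume pq: "p < dim_row (elem_mat n 1 2 (-r) :: 'a mat)" "q < dim_col (elem_mat n 1 2 (-r) :: 'a mat)"
  then have pq: "p < n" "q < n" by auto
  have "(perm_mat n c3 * elem_mat n 0 1 (-r) * perm_mat n c3i) $$ (p,q) = (perm_mat n c3 * elem_mat n 0 1 (-r)) $$ (p, c3i q)"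
    using n pq by (intro perm_right) (auto simp: c3i_lt)
  also have "\<dots> = perm_mat n c3 $$ (p, c3i q) + (if c3i q = 1 then perm_mat n c3 $$ (p, 0) * (-r) else 0)"
    using n pq by (intro elem_right) (auto simp: c3i_lt)
  also have "\<dots> = (elem_mat n 1 2 (-r) :: 'a mat) $$ (p,q)"
    using n pq c3i_lt[OF n pq(2)] by (simp add: perm_entry elem_entry c3_c3i c3i_1)
  finally show "(perm_mat n c3 * elem_mat n 0 1 (-r) * perm_mat n c3i) $$ (p,q) = (elem_mat n 1 2 (-r) :: 'a mat) $$ (p,q)" .
qed auto

lemma comm_in_N:
  fixes H :: "'a::ring_1 mat set"
  assumes n: "n \<ge> 3" and H: "H \<subseteq> carrier_mat n n" and P: "perm_mat n c3 \<in> H"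
  shows "elem_mat n 0 2 r \<in> normal_closure n (E_group n) H"
proof -
  let ?N = "normal_closure n (E_group n) H"
  let ?h = "perm_mat n c3 :: 'a mat"
  let ?h' = "perm_mat n c3i :: 'a mat"
  have hinv: "is_inv_mat n ?h ?h'" using perm_inv_c3[OF n] .
  have hN: "?h \<in> ?N"
  proof -
    have "1\<^sub>m n \<in> E_group n" unfolding E_group_def by (rule gen_one)
    moreover have "is_inv_mat n (1\<^sub>m n) (1\<^sub>m n)" by (simp add: is_inv_mat_def)
    ultimately have "1\<^sub>m n * ?h * 1\<^sub>m n \<in> ?N" unfolding normal_closure_def
      using P by (intro gen_gen) blast
    then show ?thesis by simp
  qed
  have h'N: "?h' \<in> ?N" using hN hinv unfolding normal_closure_def by (rule gen_inv)
  have x1: "elem_mat n 0 1 r * ?h * elem_mat n 0 1 (-r) \<in> ?N" unfolding normal_closure_def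
  proof (intro gen_gen)
    have "elem_mat n 0 1 r \<in> E_group n" "is_inv_mat n (elem_mat n 0 1 r) (elem_mat n 0 1 (- r))"
      using n elem_in_E[of 0 1 n r] elem_inv[of 0 1 n r] by auto
    then show "elem_mat n 0 1 r * perm_mat n c3 * elem_mat n 0 1 (- r) \<in> {g * h * g' |g h g'. g \<in> E_group n \<and> h \<in> H \<and> is_inv_mat n g g'}"
      using P by blast
  qed
  have xN: "elem_mat n 0 1 r * ?h * elem_mat n 0 1 (-r) * ?h' \<in> ?N"
    using x1 h'N unfolding normal_closure_def by (rule gen_mult)
  have xeq: "elem_mat n 0 1 r * ?h * elem_mat n 0 1 (-r) * ?h' = elem_mat n 0 1 r * elem_mat n 1 2 (-r)"
  proof -
    have "elem_mat n 0 1 r * ?h * elem_mat n 0 1 (-r) * ?h' = elem_mat n 0 1 r * (?h * elem_mat n 0 1 (-r) * ?h')"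
      by (simp del: assoc_mult_mat add: assoc_r)
    then show ?thesis using conj_c3[OF n, of r] by simp
  qed
  let ?x = "elem_mat n 0 1 r * elem_mat n 1 2 (-r) :: 'a mat"
  let ?x' = "elem_mat n 1 2 r * elem_mat n 0 1 (-r) :: 'a mat"
  have xinv: "is_inv_mat n ?x ?x'" using n elem_inv[of 1 2 n "-r"]
    by (intro inv_mult elem_inv) auto
  have "?x * elem_mat n 1 2 1 * ?x' * elem_mat n 1 2 (-1) \<in> ?N"
    using n xN xeq xinv by (intro comm1[OF H]) (auto intro: elem_in_E elem_inv)
  moreover have "?x * elem_mat n 1 2 1 * ?x' * elem_mat n 1 2 (-1) =
     elem_mat n 0 1 r * elem_mat n 1 2 (-r) * elem_mat n 1 2 1 * elem_mat n 1 2 r * elem_mat n 0 1 (-r) * elem_mat n 1 2 (-1)"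
    by (simp del: assoc_mult_mat add: assoc_r)
  moreover have "\<dots> = elem_mat n 0 2 r"
  proof -
    have e: "elem_mat n 1 2 (-r) * elem_mat n 1 2 1 * elem_mat n 1 2 r = (elem_mat n 1 2 1 :: 'a mat)"
      using n by (simp add: elem_add)
    have "elem_mat n 0 1 r * elem_mat n 1 2 (-r) * elem_mat n 1 2 1 * elem_mat n 1 2 r * elem_mat n 0 1 (-r) * elem_mat n 1 2 (-1)
      = elem_mat n 0 1 r * (elem_mat n 1 2 (-r) * elem_mat n 1 2 1 * elem_mat n 1 2 r) * elem_mat n 0 1 (-r) * elem_mat n 1 2 (-1)"
      by (simp del: assoc_mult_mat add: assoc_r)
    also have "\<dots> = elem_mat n 0 1 r * elem_mat n 1 2 1 * elem_mat n 0 1 (-r) * elem_mat n 1 2 (-1)"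
      by (simp only: e)
    also have "\<dots> = elem_mat n 0 2 (r * 1)" using n by (intro steinberg) auto
    finally show ?thesis by simp
  qed
  ultimately show ?thesis by simp
qed



lemma stein_N1:
  assumes H: "H \<subseteq> carrier_mat n n" and x: "elem_mat n a b s \<in> normal_closure n (E_group n) H"
    and d: "a \<noteq> b" "b \<noteq> c" "a \<noteq> c" "a < n" "b < n" "c < n"
  shows "elem_mat n a c (s * t) \<in> normal_closure n (E_group n) H"
proof -
  have "elem_mat n a b s * elem_mat n b c t * elem_mat n a b (-s) * elem_mat n b c (-t) \<in> normal_closure n (E_group n) H"
    using d by (intro comm1[OF H x] elem_inv elem_in_E) auto
  then show ?thesis by (simp only: steinberg[OF d])
qed

lemma stein_N2:
  assumes H: "H \<subseteq> carrier_mat n n" and x: "elem_mat n b c s \<in> normal_closure n (E_group n) H"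
    and d: "a \<noteq> b" "b \<noteq> c" "a \<noteq> c" "a < n" "b < n" "c < n"
  shows "elem_mat n a c (t * s) \<in> normal_closure n (E_group n) H"
proof -
  have "elem_mat n a b t * elem_mat n b c s * elem_mat n a b (-t) * elem_mat n b c (-s) \<in> normal_closure n (E_group n) H"
    using d by (intro comm2[OF H x] elem_inv elem_in_E) auto
  then show ?thesis by (simp only: steinberg[OF d])
qed

lemma all_elem_in_N:
  fixes H :: "'a::ring_1 mat set"
  assumes n: "n \<ge> 3" and H: "H \<subseteq> carrier_mat n n" and P: "perm_mat n c3 \<in> H"
    and ij: "i \<noteq> j" "i < n" "j < n"
  shows "elem_mat n i j r \<in> normal_closure n (E_group n) H"
proof -
  let ?N = "normal_closure n (E_group n) H"
  have e02: "\<And>s. elem_mat n 0 2 s \<in> ?N" by (rule comm_in_N[OF n H P])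
  have e0j: "elem_mat n 0 j s \<in> ?N" if "j < n" "j \<noteq> 0" "j \<noteq> 2" for j s
    using stein_N1[OF H e02[of s], where c=j and t=1] that n by simp
  have ei2: "elem_mat n i 2 s \<in> ?N" if "i < n" "i \<noteq> 0" "i \<noteq> 2" for i s
    using stein_N2[OF H e02[of s], where a=i and t=1] that n by simp
  have eij: "elem_mat n i j s \<in> ?N" if "i < n" "j < n" "i \<noteq> j" "i \<noteq> 0" "j \<noteq> 0" "j \<noteq> 2" for i j s
    using stein_N2[OF H e0j[of j s], where a=i and t=1] that n by simp
  have ei0: "elem_mat n i 0 s \<in> ?N" if "i < n" "i \<noteq> 0" "i \<noteq> 2" for i s
    using stein_N1[OF H ei2[of i s], where c=0 and t=1] that n by simp
  have e20: "\<And>s. elem_mat n 2 0 s \<in> ?N"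
  proof -
    fix s
    have "elem_mat n 2 1 s \<in> ?N" using eij[of 2 1 s] n by auto
    then show "elem_mat n 2 0 s \<in> ?N" using stein_N1[OF H, where c=0 and t=1] n by simp
  qed
  show ?thesis
  proof (cases "i = 0")
    case True
    then show ?thesis using ij e02 e0j[of j r] by (cases "j = 2") auto
  next
    case i0: False
    show ?thesis
    proof (cases "j = 2")
      case True
      then show ?thesis using ij i0 ei2[of i r] by simp
    next
      case j2: False
      show ?thesis
      proof (cases "j = 0")
        case True
        then show ?thesis using ij i0 e20[of r] ei0[of i r] by (cases "i = 2") auto
      next
        case False
        then show ?thesis using ij i0 j2 eij[of i j r] by simp
      qed
    qed
  qed
qed



lemma sigma_swap_perm: "sigma_swap n i j = perm_mat n (\<lambda>l. if l = i then j else if l = j then i else l)"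
  by (simp add: sigma_swap_def perm_mat_def)

lemma perm_mult:
  assumes "\<And>l. l < n \<Longrightarrow> q l < n"
  shows "perm_mat n p * perm_mat n q = (perm_mat n (p \<circ> q) :: 'a::ring_1 mat)"
  using assms by (intro eq_matI) (auto simp: perm_right perm_entry)

lemma mat_of_int_perm: "(mat_of_int_mat (perm_mat n p) :: 'a::ring_1 mat) = perm_mat n p"
  unfolding mat_of_int_mat_def by (intro eq_matI) (auto simp: perm_entry)

lemma c3_in_H:
  assumes n: "n \<ge> 3"
  shows "(perm_mat n c3 :: 'a::ring_1 mat) \<in> mat_of_int_mat ` alt_mats n"
proof -
  have "foldr (*) [sigma_swap n 0 1, sigma_swap n 1 2] (1\<^sub>m n) = sigma_swap n 0 1 * sigma_swap n 1 2"
    by (simp add: sigma_swap_def)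
  also have "\<dots> = perm_mat n c3" unfolding sigma_swap_perm using n
    by (subst perm_mult) (auto simp: c3_def intro!: arg_cong[of _ _ "perm_mat n"])
  moreover have "sigma_swap n 0 1 \<in> sigma_gens n" "sigma_swap n 1 2 \<in> sigma_gens n"
    unfolding sigma_gens_def using n by (intro UnI1 CollectI; fastforce)+
  ultimately have "perm_mat n c3 \<in> alt_mats n" unfolding alt_mats_def
    by (intro CollectI exI[of _ "[sigma_swap n 0 1, sigma_swap n 1 2]"]) auto
  then show ?thesis using mat_of_int_perm[of n c3] by (metis image_eqI)
qed



definition wm :: "nat \<Rightarrow> nat \<Rightarrow> nat \<Rightarrow> 'a::ring_1 mat" where
  "wm n i j = elem_mat n i j 1 * elem_mat n j i (-1) * elem_mat n i j 1"

lemma wm_carrier[simp]: "wm n i j \<in> carrier_mat n n"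
  by (simp add: wm_def)

lemma wm_dim[simp]: "dim_row (wm n i j) = n" "dim_col (wm n i j) = n"
  by (simp_all add: wm_def)

lemma wm_entry:
  assumes "i \<noteq> j" "i < n" "j < n" "k < n" "l < n"
  shows "wm n i j $$ (k,l) = (if k = l then (if k = i \<or> k = j then 0 else 1)
     else if k = i \<and> l = j then 1 else if k = j \<and> l = i then -1 else (0::'a::ring_1))"
  using assms unfolding wm_def by (auto simp: elem_right elem_entry)

lemma wm_E: "i \<noteq> j \<Longrightarrow> i < n \<Longrightarrow> j < n \<Longrightarrow> wm n i j \<in> E_group n"
  unfolding wm_def E_group_def
  by (intro gen_mult; rule elem_in_E[unfolded E_group_def]; simp)

lemma swap_dec:
  assumes "i \<noteq> j" "i < n" "j < n"
  shows "(mat_of_int_mat (sigma_swap n i j) :: 'a::ring_1 mat) = wm n i j * dsign n i"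
  using assms unfolding mat_of_int_mat_def
  by (intro eq_matI) (auto simp: dsign_right wm_entry sigma_swap_def)

definition rowm :: "nat \<Rightarrow> nat \<Rightarrow> (nat \<Rightarrow> 'a) \<Rightarrow> 'a::ring_1 mat" where
  "rowm n i c = mat n n (\<lambda>(k,l). if k = l then 1 else if k = i then c l else 0)"

lemma rowm_dim[simp]: "dim_row (rowm n i c) = n" "dim_col (rowm n i c) = n"
  by (simp_all add: rowm_def)

lemma rowm_E_aux:
  assumes "i < n"
  shows "rowm n i (\<lambda>l. if l < m then c l else 0) \<in> E_group n"
proof (induct m)
  case 0
  have "rowm n i (\<lambda>l. if l < 0 then c l else 0) = 1\<^sub>m n"
    by (intro eq_matI) (auto simp: rowm_def)
  then show ?case by (simp add: E_group_def gen_one)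
next
  case (Suc m)
  show ?case
  proof (cases "m = i \<or> m \<ge> n")
    case True
    have "rowm n i (\<lambda>l. if l < Suc m then c l else 0) = rowm n i (\<lambda>l. if l < m then c l else 0)"
      using True by (intro eq_matI) (auto simp: rowm_def)
    then show ?thesis using Suc by simp
  next
    case False
    have "rowm n i (\<lambda>l. if l < Suc m then c l else 0) = rowm n i (\<lambda>l. if l < m then c l else 0) * elem_mat n i m (c m)"
      using False assms by (intro eq_matI) (auto simp: elem_right rowm_def)
    moreover have "elem_mat n i m (c m) \<in> E_group n" using False assms by (intro elem_in_E) auto
    ultimately show ?thesis using Suc unfolding E_group_def by (simp add: gen_mult)
  qed
qed

lemma rowm_E:
  assumes "i < n"
  shows "rowm n i c \<in> E_group n"
proof -
  have "rowm n i c = rowm n i (\<lambda>l. if l < n then c l else 0)"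
    by (intro eq_matI) (auto simp: rowm_def)
  then show ?thesis using rowm_E_aux[OF assms] by simp
qed

lemma last_dec:
  assumes "i < n"
  shows "(mat_of_int_mat (sigma_last n i) :: 'a::ring_1 mat) = rowm n i (\<lambda>_. -1) * dsign n i"
  using assms unfolding mat_of_int_mat_def
  by (intro eq_matI) (auto simp: dsign_right rowm_def sigma_last_def)

lemma gen_dec:
  assumes "s \<in> sigma_gens n"
  shows "\<exists>X \<in> E_group n. \<exists>a < n. (mat_of_int_mat s :: 'a::ring_1 mat) = X * dsign n a"
  using assms unfolding sigma_gens_def
proof (elim UnE CollectE exE conjE)
  fix i j assume "s = sigma_swap n i j" "i < n" "j < n" "i \<noteq> j"
  then show ?thesis using swap_dec[of i j n] wm_E[of i j n] by blast
next
  fix i assume "s = sigma_last n i" "i < n"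
  then show ?thesis using last_dec[of i n] rowm_E[of i n] by blast
qed

lemma dsign_entry: "k < n \<Longrightarrow> l < n \<Longrightarrow> dsign n a $$ (k,l) = (if k = l then (if k = a then -1 else 1) else 0)"
  by (simp add: dsign_def)

lemma dsign_sq: "dsign n a * dsign n a = (1\<^sub>m n :: 'a::ring_1 mat)"
  by (intro eq_matI) (auto simp: dsign_right dsign_entry)

lemma dsign_elem:
  assumes "i \<noteq> j" "i < n" "j < n" "a < n"
  shows "dsign n a * elem_mat n i j r * dsign n a =
    (elem_mat n i j (if (i = a) = (j = a) then r else - r) :: 'a::ring_1 mat)"
  using assms by (intro eq_matI) (auto simp: dsign_right dsign_left elem_entry)

lemma dconj:
  assumes a: "a < n" and Y: "Y \<in> E_group n"
  shows "dsign n a * Y * dsign n a \<in> E_group n"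
  using Y[unfolded E_group_def]
proof (induct rule: gen_subgroup.induct)
  case gen_one
  have "dsign n a * 1\<^sub>m n * dsign n a = (1\<^sub>m n :: 'a mat)" using dsign_sq[of n a] by simp
  then show ?case by (simp only: gen_subgroup.gen_one E_group_def)
next
  case (gen_gen s)
  then obtain i j r where "s = elem_mat n i j r" "i < n" "j < n" "i \<noteq> j" by (auto simp: elem_gens_def)
  then show ?case using a by (simp add: dsign_elem elem_in_E)
next
  case (gen_mult x y)
  have c: "x \<in> carrier_mat n n" "y \<in> carrier_mat n n"
    using gen_mult E_carrier unfolding E_group_def by blast+
  have "dsign n a * (x * y) * dsign n a = (dsign n a * x * dsign n a) * (dsign n a * y * dsign n a)"
  proof -
    have "(dsign n a * x * dsign n a) * (dsign n a * y * dsign n a) = dsign n a * x * (dsign n a * dsign n a) * y * dsign n a"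
      using c by (simp del: assoc_mult_mat add: assoc_r)
    also have "\<dots> = dsign n a * (x * y) * dsign n a"
      using c by (simp del: assoc_mult_mat add: assoc_r dsign_sq)
    finally show ?thesis by simp
  qed
  then show ?case using gen_mult unfolding E_group_def by (simp add: gen_subgroup.gen_mult)
next
  case (gen_inv x y)
  have c: "x \<in> carrier_mat n n" "y \<in> carrier_mat n n"
    using gen_inv E_carrier unfolding E_group_def by (auto simp: is_inv_mat_def)
  have "is_inv_mat n (dsign n a * x * dsign n a) (dsign n a * y * dsign n a)"
    unfolding is_inv_mat_def
  proof (intro conjI)
    show "dsign n a * x * dsign n a * (dsign n a * y * dsign n a) = 1\<^sub>m n"
    proof -
      have "dsign n a * x * dsign n a * (dsign n a * y * dsign n a) = dsign n a * x * (dsign n a * dsign n a) * y * dsign n a"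
        using c by (simp del: assoc_mult_mat add: assoc_r)
      also have "\<dots> = dsign n a * (x * y) * dsign n a"
        using c by (simp del: assoc_mult_mat add: assoc_r dsign_sq)
      also have "\<dots> = 1\<^sub>m n" using gen_inv c by (simp add: is_inv_mat_def dsign_sq)
      finally show ?thesis .
    qed
    show "dsign n a * y * dsign n a * (dsign n a * x * dsign n a) = 1\<^sub>m n"
    proof -
      have "dsign n a * y * dsign n a * (dsign n a * x * dsign n a) = dsign n a * y * (dsign n a * dsign n a) * x * dsign n a"
        using c by (simp del: assoc_mult_mat add: assoc_r)
      also have "\<dots> = dsign n a * (y * x) * dsign n a"
        using c by (simp del: assoc_mult_mat add: assoc_r dsign_sq)
      also have "\<dots> = 1\<^sub>m n" using gen_inv c by (simp add: is_inv_mat_def dsign_sq)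
      finally show ?thesis .
    qed
  qed (use c in simp)
  then show ?case using gen_inv unfolding E_group_def by (blast intro: gen_subgroup.gen_inv)
qed

lemma dd_E:
  assumes "a < n" "b < n"
  shows "dsign n a * dsign n b \<in> (E_group n :: 'a::ring_1 mat set)"
proof (cases "a = b")
  case True
  then have "dsign n a * dsign n b = (1\<^sub>m n :: 'a mat)" using dsign_sq[of n a] by simp
  then show ?thesis by (simp only: gen_subgroup.gen_one E_group_def)
next
  case False
  have "wm n a b * wm n a b = wm n a b * elem_mat n a b 1 * elem_mat n b a (-1) * elem_mat n a b 1"
    unfolding wm_def by (simp del: assoc_mult_mat add: assoc_r)
  also have "\<dots> = (dsign n a * dsign n b :: 'a mat)"
    using False assms by (intro eq_matI) (auto simp: elem_right wm_entry dsign_right dsign_entry)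
  finally have "dsign n a * dsign n b = (wm n a b * wm n a b :: 'a mat)" by simp
  then show ?thesis using wm_E[OF False assms] unfolding E_group_def by (metis gen_subgroup.gen_mult)
qed



lemma sigma_carrier: "s \<in> sigma_gens n \<Longrightarrow> s \<in> carrier_mat n n"
  by (auto simp: sigma_gens_def sigma_swap_def sigma_last_def)

lemma foldr_carrier: "set ws \<subseteq> sigma_gens n \<Longrightarrow> foldr (*) ws (1\<^sub>m n) \<in> carrier_mat n n"
  by (induct ws) (auto simp: sigma_carrier)

lemma pair_E:
  assumes s: "s \<in> sigma_gens n" and t: "t \<in> sigma_gens n" and F: "F \<in> E_group n"
  shows "(mat_of_int_mat s :: 'a::ring_1 mat) * (mat_of_int_mat t * F) \<in> E_group n"
proof -
  obtain X a where X: "X \<in> E_group n" "a < n" "(mat_of_int_mat s :: 'a mat) = X * dsign n a"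
    using gen_dec[OF s] by blast
  obtain Y b where Y: "Y \<in> E_group n" "b < n" "(mat_of_int_mat t :: 'a mat) = Y * dsign n b"
    using gen_dec[OF t] by blast
  have c: "X \<in> carrier_mat n n" "Y \<in> carrier_mat n n" "F \<in> carrier_mat n n"
    using X Y F E_carrier by blast+
  have "X * (dsign n a * Y * dsign n a) * (dsign n a * dsign n b) * F
      = X * dsign n a * Y * (dsign n a * dsign n a) * dsign n b * F"
    using c by (simp del: assoc_mult_mat add: assoc_r)
  also have "\<dots> = X * dsign n a * (Y * dsign n b * F)"
    using c by (simp del: assoc_mult_mat add: assoc_r dsign_sq)
  finally have eq: "(mat_of_int_mat s :: 'a mat) * (mat_of_int_mat t * F) = X * (dsign n a * Y * dsign n a) * (dsign n a * dsign n b) * F"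
    using X Y by simp
  have "X * (dsign n a * Y * dsign n a) * (dsign n a * dsign n b) * F \<in> E_group n"
    using X Y F dconj[OF X(2) Y(1)] dd_E[OF X(2) Y(2)] unfolding E_group_def
    by (meson gen_subgroup.gen_mult)
  then show ?thesis using eq by simp
qed

lemma alt_E_aux:
  "set ws \<subseteq> sigma_gens n \<Longrightarrow> even (length ws) \<Longrightarrow>
    (mat_of_int_mat (foldr (*) ws (1\<^sub>m n)) :: 'a::ring_1 mat) \<in> E_group n"
proof (induct ws rule: induct_list012)
  case 1
  then show ?case by (simp add: mat_of_int_one E_group_def gen_subgroup.gen_one)
next
  case (2 x)
  then show ?case by simp
next
  case (3 x y zs)
  have c: "x \<in> carrier_mat n n" "y \<in> carrier_mat n n" "foldr (*) zs (1\<^sub>m n) \<in> carrier_mat n n"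
    using 3 sigma_carrier foldr_carrier by auto
  have "(mat_of_int_mat (foldr (*) (x # y # zs) (1\<^sub>m n)) :: 'a mat)
     = mat_of_int_mat x * (mat_of_int_mat y * mat_of_int_mat (foldr (*) zs (1\<^sub>m n)))"
    using c by (simp add: mat_of_int_mult[of _ n])
  moreover have "(mat_of_int_mat (foldr (*) zs (1\<^sub>m n)) :: 'a mat) \<in> E_group n"
    using 3 by simp
  moreover have "x \<in> sigma_gens n" "y \<in> sigma_gens n" using 3(3) by auto
  ultimately show ?case using pair_E by metis
qed

lemma H_sub_E: "(mat_of_int_mat ` alt_mats n :: 'a::ring_1 mat set) \<subseteq> E_group n"
  unfolding alt_mats_def using alt_E_aux by blast



definition Mp :: "nat \<Rightarrow> (nat \<Rightarrow> nat) \<Rightarrow> int mat" where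
  "Mp n p = mat n n (\<lambda>(k,l). (if p l = k then 1 else 0) - (if p n = k then 1 else 0))"

definition good :: "nat \<Rightarrow> (nat \<Rightarrow> nat) \<Rightarrow> bool" where
  "good n p \<longleftrightarrow> inj_on p {..n} \<and> p ` {..n} \<subseteq> {..n}"

lemma Mp_carrier[simp]: "Mp n p \<in> carrier_mat n n" by (simp add: Mp_def)

lemma Mp_entry: "k < n \<Longrightarrow> l < n \<Longrightarrow> Mp n p $$ (k,l) = (if p l = k then 1 else 0) - (if p n = k then 1 else 0)"
  by (simp add: Mp_def)

lemma delta_sum: "(\<Sum>j<(n::nat). a j * (if m = j then 1 else 0)) = (if m < n then a m else (0::int))"
proof -
  have "(\<Sum>j<n. a j * (if m = j then 1 else 0)) = (\<Sum>j<n. if j = m then a j else 0)"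
    by (intro sum.cong) auto
  also have "\<dots> = (if m \<in> {..<n} then a m else 0)" by (rule sum.delta) simp
  finally show ?thesis by simp
qed

lemma Mp_dim[simp]: "dim_row (Mp n p) = n" "dim_col (Mp n p) = n" by (simp_all add: Mp_def)

lemma Mp_mult:
  assumes g: "good n q"
  shows "Mp n p * Mp n q = Mp n (p \<circ> q)"
proof (intro eq_matI)
  fix k l assume kl: "k < dim_row (Mp n (p \<circ> q))" "l < dim_col (Mp n (p \<circ> q))"
  then have kl: "k < n" "l < n" by (auto simp: Mp_def)
  define a where "a j = (if p j = k then 1 else 0) - (if p n = k then 1 else (0::int))" for j
  have "(Mp n p * Mp n q) $$ (k,l) = (\<Sum>j<n. Mp n p $$ (k,j) * Mp n q $$ (j,l))"
    using kl by (intro prod_entry) auto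
  also have "\<dots> = (\<Sum>j<n. a j * (if q l = j then 1 else 0)) - (\<Sum>j<n. a j * (if q n = j then 1 else 0))"
    using kl by (simp add: Mp_entry a_def sum_subtractf[symmetric] right_diff_distrib)
  also have "\<dots> = (if q l < n then a (q l) else 0) - (if q n < n then a (q n) else 0)"
    by (simp add: delta_sum)
  also have "\<dots> = a (q l) - a (q n)"
  proof -
    have "a n = 0" by (simp add: a_def)
    moreover have "q l \<le> n" "q n \<le> n" using g kl by (auto simp: good_def image_subset_iff)
    ultimately show ?thesis by (metis le_neq_implies_less)
  qed
  also have "\<dots> = Mp n (p \<circ> q) $$ (k,l)" using kl by (simp add: Mp_entry a_def)
  finally show "(Mp n p * Mp n q) $$ (k,l) = Mp n (p \<circ> q) $$ (k,l)" .
qed (auto simp: Mp_def)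

lemma good_comp: "good n p \<Longrightarrow> good n q \<Longrightarrow> good n (p \<circ> q)"
  unfolding good_def by (auto intro: comp_inj_on inj_on_subset)

lemma one_Mp: "1\<^sub>m n = Mp n (\<lambda>x. x)"
  by (intro eq_matI) (auto simp: Mp_def)

lemma invol_good:
  assumes "\<And>x. s (s x) = x" "\<And>x. x \<le> n \<Longrightarrow> s x \<le> n"
  shows "good n s"
  unfolding good_def
proof
  show "inj_on s {..n}" by (metis assms(1) inj_onI)
  show "s ` {..n} \<subseteq> {..n}" using assms(2) by auto
qed

lemma swap_Mp:
  assumes "i < n" "j < n"
  shows "sigma_swap n i j = Mp n (\<lambda>l. if l = i then j else if l = j then i else l)"
    "good n (\<lambda>l. if l = i then j else if l = j then i else l)"
proof -
  define s where "s = (\<lambda>l. if l = i then j else if l = j then i else l)"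
  have sn: "s n = n" using assms by (simp add: s_def)
  have "sigma_swap n i j = perm_mat n s" by (simp add: sigma_swap_perm s_def)
  also have "\<dots> = Mp n s"
    by (rule eq_matI) (auto simp: perm_entry Mp_entry sn)
  finally show "sigma_swap n i j = Mp n (\<lambda>l. if l = i then j else if l = j then i else l)"
    by (simp add: s_def)
  have "good n s" using assms by (intro invol_good) (auto simp: s_def)
  then show "good n (\<lambda>l. if l = i then j else if l = j then i else l)" by (simp add: s_def)
qed

lemma last_Mp:
  assumes "i < n"
  shows "sigma_last n i = Mp n (\<lambda>l. if l = i then n else if l = n then i else l)"
    "good n (\<lambda>l. if l = i then n else if l = n then i else l)"
proof -
  define s where "s = (\<lambda>l. if l = i then n else if l = n then i else l)"
  have si: "s i = n" "s n = i" "\<And>l. l \<noteq> i \<Longrightarrow> l \<noteq> n \<Longrightarrow> s l = l" using assms by (auto simp: s_def)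
  have "sigma_last n i = Mp n s"
  proof (rule eq_matI)
    fix k l assume kl: "k < dim_row (Mp n s)" "l < dim_col (Mp n s)"
    then have kl: "k < n" "l < n" by auto
    show "sigma_last n i $$ (k, l) = Mp n s $$ (k, l)"
    proof (cases "l = i")
      case True
      then show ?thesis using kl si by (simp add: Mp_entry sigma_last_def)
    next
      case False
      then show ?thesis using kl si(2) si(3)[of l] by (auto simp: Mp_entry sigma_last_def)
    qed
  qed (auto simp: sigma_last_def)
  then show "sigma_last n i = Mp n (\<lambda>l. if l = i then n else if l = n then i else l)"
    by (simp add: s_def)
  have "good n s" using assms by (intro invol_good) (auto simp: s_def)
  then show "good n (\<lambda>l. if l = i then n else if l = n then i else l)" by (simp add: s_def)
qed

lemma foldr_Mp: "set ws \<subseteq> sigma_gens n \<Longrightarrow> \<exists>p. good n p \<and> foldr (*) ws (1\<^sub>m n) = Mp n p"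
proof (induct ws)
  case Nil
  then show ?case by (intro exI[of _ "\<lambda>x. x"]) (auto simp: good_def one_Mp)
next
  case (Cons s ws)
  then obtain q where q: "good n q" "foldr (*) ws (1\<^sub>m n) = Mp n q" by auto
  have "s \<in> sigma_gens n" using Cons by auto
  have "\<exists>p. good n p \<and> s = Mp n p"
    using \<open>s \<in> sigma_gens n\<close> unfolding sigma_gens_def
  proof (elim UnE CollectE exE conjE)
    fix i j assume "s = sigma_swap n i j" "i < n" "j < n" "i \<noteq> j"
    then show ?thesis using swap_Mp[of i n j] by blast
  next
    fix i assume "s = sigma_last n i" "i < n"
    then show ?thesis using last_Mp[of i n] by blast
  qed
  then obtain p where p: "good n p" "s = Mp n p" by blast
  have "good n (p \<circ> q)" using p q good_comp by blast
  moreover have "foldr (*) (s # ws) (1\<^sub>m n) = Mp n (p \<circ> q)" using p q Mp_mult[of n q p] by simp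
  ultimately show ?case by blast
qed

lemma Mp_inj:
  assumes n: "n \<ge> 3" and one: "(1::'a::ring_1) \<noteq> 0" and p: "good n p" and q: "good n q"
    and eq: "(mat_of_int_mat (Mp n p) :: 'a mat) = mat_of_int_mat (Mp n q)"
  shows "Mp n p = Mp n q"
proof -
  have e: "(of_int (Mp n p $$ (k,l)) :: 'a) = of_int (Mp n q $$ (k,l))" if "k < n" "l < n" for k l
  proof -
    have "(mat_of_int_mat (Mp n p) :: 'a mat) $$ (k,l) = mat_of_int_mat (Mp n q) $$ (k,l)" using eq by simp
    then show ?thesis using that unfolding mat_of_int_mat_def by (simp add: index_map_mat)
  qed
  have m1: "(of_int (-1) :: 'a) \<noteq> of_int 0" using one by simp
  have m2: "(of_int 1 :: 'a) \<noteq> of_int 0" using one by simp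
  have injp: "\<And>x y. x \<le> n \<Longrightarrow> y \<le> n \<Longrightarrow> p x = p y \<Longrightarrow> x = y"
    and injq: "\<And>x y. x \<le> n \<Longrightarrow> y \<le> n \<Longrightarrow> q x = q y \<Longrightarrow> x = y"
    and rp: "\<And>x. x \<le> n \<Longrightarrow> p x \<le> n" and rq: "\<And>x. x \<le> n \<Longrightarrow> q x \<le> n"
    using p q unfolding good_def inj_on_def by auto
  have pq: "p x = q x" if x: "x \<le> n" for x
  proof (rule ccontr)
    assume ne: "p x \<noteq> q x"
    show False
    proof (cases "p n = q n")
      case True
      have xn: "x < n" using ne True x by (cases "x = n") auto
      show False
      proof (cases "p x = n")
        case False
        then have k: "p x < n" using rp[of x] x by auto
        have "p n \<noteq> p x" using injp[of n x] xn by auto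
        then have "Mp n p $$ (p x, x) = 1" "Mp n q $$ (p x, x) = 0"
          using k xn True ne by (auto simp: Mp_entry)
        then show False using e[OF k xn] m2 by simp
      next
        case True
        then have qx: "q x \<noteq> n" using ne by auto
        then have k: "q x < n" using rq[of x] x by auto
        have "q n \<noteq> q x" using injq[of n x] xn by auto
        then have "Mp n q $$ (q x, x) = 1" "Mp n p $$ (q x, x) = 0"
          using k xn \<open>p n = q n\<close> ne by (auto simp: Mp_entry)
        then show False using e[OF k xn] m2 by simp
      qed
    next
      case False
      have "\<exists>a b. (a = p \<and> b = q \<or> a = q \<and> b = p) \<and> a n < n"
      proof (cases "p n = n")
        case True
        then have "q n < n" using False rq[of n] by auto
        then show ?thesis by blast
      next
        case False
        then have "p n < n" using rp[of n] by auto
        then show ?thesis by blast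
      qed
      then obtain a b where ab: "a = p \<and> b = q \<or> a = q \<and> b = p" "a n < n" by blast
      have ga: "\<And>x y. x \<le> n \<Longrightarrow> y \<le> n \<Longrightarrow> a x = a y \<Longrightarrow> x = y"
        and gb: "\<And>x y. x \<le> n \<Longrightarrow> y \<le> n \<Longrightarrow> b x = b y \<Longrightarrow> x = y"
        using ab(1) injp injq by blast+
      have abn: "a n \<noteq> b n" using ab(1) False by auto
      have e': "(of_int (Mp n a $$ (k,l)) :: 'a) = of_int (Mp n b $$ (k,l))" if "k < n" "l < n" for k l
        using ab(1) e[OF that] by auto
      obtain l where l: "l < n" "b l \<noteq> a n"
      proof (cases "b 0 = a n")
        case True
        have "b 1 \<noteq> a n" using True gb[of 0 1] n by auto
        then show ?thesis using that[of 1] n by auto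
      next
        case False
        then show ?thesis using that[of 0] n by auto
      qed
      have "a l \<noteq> a n" using ga[of l n] l by auto
      then have "Mp n a $$ (a n, l) = -1" "Mp n b $$ (a n, l) = 0"
        using l ab(2) abn by (auto simp: Mp_entry)
      then show False using e'[OF ab(2) l(1)] m1 by simp
    qed
  qed
  show ?thesis by (intro eq_matI) (auto simp: Mp_def pq)
qed

lemma alt_inj:
  assumes n: "n \<ge> 3" and one: "(1::'a::ring_1) \<noteq> 0"
  shows "inj_on (mat_of_int_mat :: int mat \<Rightarrow> 'a mat) (alt_mats n)"
proof (rule inj_onI)
  fix A B assume A: "A \<in> alt_mats n" and B: "B \<in> alt_mats n"
    and eq: "(mat_of_int_mat A :: 'a mat) = mat_of_int_mat B"
  obtain p where p: "good n p" "A = Mp n p" using A foldr_Mp unfolding alt_mats_def by blast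
  obtain q where q: "good n q" "B = Mp n q" using B foldr_Mp unfolding alt_mats_def by blast
  show "A = B" using Mp_inj[OF n one p(1) q(1)] eq p q by simp
qed

theorem lemma5p2:
  fixes n :: nat
  assumes "n \<ge> 3"
  shows "normal_closure n (E_group n) (mat_of_int_mat ` alt_mats n) = (E_group n :: 'a::ring_1 mat set)
         \<and> ((1::'a) \<noteq> 0 \<longrightarrow> inj_on (mat_of_int_mat :: int mat \<Rightarrow> 'a mat) (alt_mats n))"
proof
  let ?H = "mat_of_int_mat ` alt_mats n :: 'a mat set"
  have HE: "?H \<subseteq> E_group n" by (rule H_sub_E)
  have Hc: "?H \<subseteq> carrier_mat n n" using HE E_carrier by blast
  have P: "perm_mat n c3 \<in> ?H" using c3_in_H[OF assms] .
  show "normal_closure n (E_group n) ?H = E_group n"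
  proof
    show "normal_closure n (E_group n) ?H \<subseteq> E_group n"
    proof
      fix x :: "'a mat" assume x: "x \<in> normal_closure n (E_group n) ?H"
      have "{g * h * g' |g h g'. g \<in> E_group n \<and> h \<in> ?H \<and> is_inv_mat n g g'} \<subseteq> gen_subgroup n (elem_gens n)"
      proof
        fix y :: "'a mat" assume "y \<in> {g * h * g' |g h g'. g \<in> E_group n \<and> h \<in> ?H \<and> is_inv_mat n g g'}"
        then obtain g h g' where y: "y = g * h * g'" "g \<in> E_group n" "h \<in> ?H" "is_inv_mat n g g'" by blast
        have "g' \<in> E_group n" using y unfolding E_group_def by (blast intro: gen_subgroup.gen_inv)
        then show "y \<in> gen_subgroup n (elem_gens n)" using y HE unfolding E_group_def
          by (blast intro: gen_subgroup.gen_mult)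
      qed
      then show "x \<in> E_group n" using x gen_mono unfolding normal_closure_def E_group_def by blast
    qed
  next
    show "E_group n \<subseteq> normal_closure n (E_group n) ?H"
    proof
      fix x :: "'a mat" assume x: "x \<in> E_group n"
      have "elem_gens n \<subseteq> normal_closure n (E_group n) ?H"
        using all_elem_in_N[OF assms Hc P] unfolding elem_gens_def by blast
      then show "x \<in> normal_closure n (E_group n) ?H"
        using x gen_mono unfolding E_group_def normal_closure_def by blast
    qed
  qed
  show "(1::'a) \<noteq> 0 \<longrightarrow> inj_on (mat_of_int_mat :: int mat \<Rightarrow> 'a mat) (alt_mats n)"
    using alt_inj[OF assms] by blast
qed

end
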